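(* Let $G$ be a finite group and $p$ a prime number, and let $r=\max\{d((G/p(G))^{\mathrm{ab}}),1\}$. Then there exist subgroups $Q_1,\dots,Q_r$ of $G$, each of which is cyclic-by-$p$, such that $G$ is generated by the union of the conjugacy classes $Q_1^G\cup\dots\cup Q_r^G$, where $Q_i^G=\{gxg^{-1}: g\in G, x\in Q_i\}$.
   Context: $d(H)$ is the minimal number of generators of a finite group $H$, $H^{\mathrm{ab}}$ its abelianization, and $p(H)$ the subgroup generated by the $p$-Sylow subgroups of $H$. A group $Q$ is cyclic-by-$p$ if it has a normal $p$-subgroup $P$ with $Q/P$ cyclic. *)

theory Defs
  imports "HOL-Algebra.Algebra" "HOL-Computational_Algebra.Primes"
begin

definition min_gens :: "('b, 'c) monoid_scheme \<Rightarrow> nat" where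
  "min_gens H = (LEAST n. \<exists>S. S \<subseteq> carrier H \<and> finite S \<and> card S = n
                              \<and> generate H S = carrier H)"

definition abelianization :: "('b, 'c) monoid_scheme \<Rightarrow> 'b set monoid" where
  "abelianization H = H Mod (derived H (carrier H))"

definition p_group :: "nat \<Rightarrow> ('b, 'c) monoid_scheme \<Rightarrow> bool" where
  "p_group p H \<longleftrightarrow> group H \<and> finite (carrier H) \<and> (\<exists>k. card (carrier H) = p ^ k)"

definition sylow_subgroup :: "('b, 'c) monoid_scheme \<Rightarrow> nat \<Rightarrow> 'b set \<Rightarrow> bool" where
  "sylow_subgroup G p P \<longleftrightarrow> subgroup P G \<and> card P = p ^ multiplicity p (order G)"

definition sylow_gen :: "('b, 'c) monoid_scheme \<Rightarrow> nat \<Rightarrow> 'b set" where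
  "sylow_gen G p = generate G (\<Union> {P. sylow_subgroup G p P})"

definition is_cyclic :: "('b, 'c) monoid_scheme \<Rightarrow> bool" where
  "is_cyclic H \<longleftrightarrow> group H \<and> (\<exists>x \<in> carrier H. generate H {x} = carrier H)"

definition cyclic_by_p :: "('b, 'c) monoid_scheme \<Rightarrow> nat \<Rightarrow> 'b set \<Rightarrow> bool" where
  "cyclic_by_p G p Q \<longleftrightarrow> (\<exists>P. P \<lhd> (G\<lparr>carrier := Q\<rparr>)
        \<and> p_group p (G\<lparr>carrier := P\<rparr>)
        \<and> is_cyclic ((G\<lparr>carrier := Q\<rparr>) Mod P))"

definition conj_closure :: "('b, 'c) monoid_scheme \<Rightarrow> 'b set \<Rightarrow> 'b set" where
  "conj_closure G Q = {g \<otimes>\<^bsub>G\<^esub> x \<otimes>\<^bsub>G\<^esub> inv\<^bsub>G\<^esub> g | g x. g \<in> carrier G \<and> x \<in> Q}"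

end

theory Submission
  imports Defs "HOL-Computational_Algebra.Primes"
begin



context group begin

lemma comm_iff: "x \<in> carrier G \<Longrightarrow> y \<in> carrier G \<Longrightarrow> (x \<otimes> y \<otimes> inv x \<otimes> inv y = \<one>) \<longleftrightarrow> (x \<otimes> y = y \<otimes> x)"
  by (metis inv_closed inv_solve_right m_closed r_inv)

lemma comm_inv: "x \<in> carrier G \<Longrightarrow> a \<in> carrier G \<Longrightarrow> x \<otimes> a = a \<otimes> x \<Longrightarrow> inv x \<otimes> a = a \<otimes> inv x"
  by (metis inv_closed inv_solve_left m_assoc m_closed r_inv r_one)

lemma quot_group: "N \<lhd> G \<Longrightarrow> group (G Mod N)"
  by (simp add: normal.factorgroup_is_group)

lemma quot_hom: "N \<lhd> G \<Longrightarrow> group_hom G (G Mod N) (\<lambda>a. N #> a)"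
  by (simp add: group_hom.intro group_hom_axioms.intro is_group normal.r_coset_hom_Mod quot_group)

lemma quot_kernel: "N \<lhd> G \<Longrightarrow> x \<in> carrier G \<Longrightarrow> (N #> x = N) \<longleftrightarrow> x \<in> N"
  by (meson coset_join1 coset_join2 normal_imp_subgroup)

lemma quot_comm:
  assumes N: "N \<lhd> G" and x: "x \<in> carrier G" and y: "y \<in> carrier G"
  shows "(x \<otimes> y \<otimes> inv x \<otimes> inv y \<in> N) \<longleftrightarrow>
     (N #> x) \<otimes>\<^bsub>G Mod N\<^esub> (N #> y) = (N #> y) \<otimes>\<^bsub>G Mod N\<^esub> (N #> x)"
proof -
  interpret h: group_hom G "G Mod N" "\<lambda>a. N #> a" using quot_hom[OF N] .
  have c: "x \<otimes> y \<otimes> inv x \<otimes> inv y \<in> carrier G" using x y by simp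
  have "(x \<otimes> y \<otimes> inv x \<otimes> inv y \<in> N) \<longleftrightarrow> N #> (x \<otimes> y \<otimes> inv x \<otimes> inv y) = \<one>\<^bsub>G Mod N\<^esub>"
    using quot_kernel[OF N c] by (simp only: one_FactGroup)
  also have "N #> (x \<otimes> y \<otimes> inv x \<otimes> inv y) = (N #> x) \<otimes>\<^bsub>G Mod N\<^esub> (N #> y) \<otimes>\<^bsub>G Mod N\<^esub> inv\<^bsub>G Mod N\<^esub> (N #> x) \<otimes>\<^bsub>G Mod N\<^esub> inv\<^bsub>G Mod N\<^esub> (N #> y)"
    using x y by (simp add: h.hom_mult del: mult_FactGroup one_FactGroup)
  finally show ?thesis
    using group.comm_iff[OF quot_group[OF N]] x y h.hom_closed by (simp del: mult_FactGroup one_FactGroup)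
qed

end

lemma (in group_hom) cent_pre_subgroup:
  assumes "A \<subseteq> carrier G"
  shows "subgroup {g \<in> carrier G. \<forall>a\<in>A. h g \<otimes>\<^bsub>H\<^esub> h a = h a \<otimes>\<^bsub>H\<^esub> h g} G"
proof (rule subgroup.intro)
  fix x y assume x: "x \<in> {g \<in> carrier G. \<forall>a\<in>A. h g \<otimes>\<^bsub>H\<^esub> h a = h a \<otimes>\<^bsub>H\<^esub> h g}"
    and y: "y \<in> {g \<in> carrier G. \<forall>a\<in>A. h g \<otimes>\<^bsub>H\<^esub> h a = h a \<otimes>\<^bsub>H\<^esub> h g}"
  show "x \<otimes> y \<in> {g \<in> carrier G. \<forall>a\<in>A. h g \<otimes>\<^bsub>H\<^esub> h a = h a \<otimes>\<^bsub>H\<^esub> h g}"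
  proof (safe)
    show "x \<otimes> y \<in> carrier G" using x y by simp
    fix a assume a: "a \<in> A"
    hence ac: "a \<in> carrier G" using assms by auto
    have "h (x \<otimes> y) \<otimes>\<^bsub>H\<^esub> h a = h x \<otimes>\<^bsub>H\<^esub> (h y \<otimes>\<^bsub>H\<^esub> h a)"
      using x y ac by (simp add: H.m_assoc)
    also have "\<dots> = h x \<otimes>\<^bsub>H\<^esub> (h a \<otimes>\<^bsub>H\<^esub> h y)" using y a by auto
    also have "\<dots> = (h x \<otimes>\<^bsub>H\<^esub> h a) \<otimes>\<^bsub>H\<^esub> h y" using x y ac by (simp add: H.m_assoc)
    also have "\<dots> = (h a \<otimes>\<^bsub>H\<^esub> h x) \<otimes>\<^bsub>H\<^esub> h y" using x a by auto
    also have "\<dots> = h a \<otimes>\<^bsub>H\<^esub> h (x \<otimes> y)" using x y ac by (simp add: H.m_assoc)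
    finally show "h (x \<otimes> y) \<otimes>\<^bsub>H\<^esub> h a = h a \<otimes>\<^bsub>H\<^esub> h (x \<otimes> y)" .
  qed
next
  fix x assume x: "x \<in> {g \<in> carrier G. \<forall>a\<in>A. h g \<otimes>\<^bsub>H\<^esub> h a = h a \<otimes>\<^bsub>H\<^esub> h g}"
  show "inv x \<in> {g \<in> carrier G. \<forall>a\<in>A. h g \<otimes>\<^bsub>H\<^esub> h a = h a \<otimes>\<^bsub>H\<^esub> h g}"
    using x assms H.comm_inv by auto
qed (use assms in auto)




definition CZ :: "('a, 'b) monoid_scheme \<Rightarrow> nat \<Rightarrow> (nat \<Rightarrow> 'a) \<Rightarrow> 'a set" where
  "CZ G r z = (\<Union>i<r. conj_closure G {z i})"

context group begin

lemma conj_closure_sub: "Q \<subseteq> carrier G \<Longrightarrow> conj_closure G Q \<subseteq> carrier G"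
  unfolding conj_closure_def by auto

lemma conj_closure_incl: "Q \<subseteq> carrier G \<Longrightarrow> Q \<subseteq> conj_closure G Q"
  unfolding conj_closure_def by force

lemma conj_closure_conj:
  assumes "Q \<subseteq> carrier G" "g \<in> carrier G" "a \<in> conj_closure G Q"
  shows "g \<otimes> a \<otimes> inv g \<in> conj_closure G Q"
proof -
  obtain h x where hx: "a = h \<otimes> x \<otimes> inv h" "h \<in> carrier G" "x \<in> Q"
    using assms(3) unfolding conj_closure_def by blast
  have xc: "x \<in> carrier G" using hx assms by auto
  have "g \<otimes> a \<otimes> inv g = (g \<otimes> h) \<otimes> x \<otimes> inv (g \<otimes> h)"
    using hx xc assms by (simp add: m_assoc inv_mult_group)
  thus ?thesis unfolding conj_closure_def using hx assms by blast
qed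

lemma conj_closure_normal_sub: "N \<lhd> G \<Longrightarrow> Q \<subseteq> N \<Longrightarrow> conj_closure G Q \<subseteq> N"
  unfolding conj_closure_def using normal.inv_op_closed2 by fastforce

lemma CZ_sub: "(\<forall>i<r. z i \<in> carrier G) \<Longrightarrow> CZ G r z \<subseteq> carrier G"
proof
  fix a assume "\<forall>i<r. z i \<in> carrier G" "a \<in> CZ G r z"
  then obtain i where "i < r" "a \<in> conj_closure G {z i}" unfolding CZ_def by blast
  thus "a \<in> carrier G" using conj_closure_sub[of "{z i}"] \<open>\<forall>i<r. z i \<in> carrier G\<close> by blast
qed

lemma CZ_conj: "(\<forall>i<r. z i \<in> carrier G) \<Longrightarrow> g \<in> carrier G \<Longrightarrow> a \<in> CZ G r z \<Longrightarrow> g \<otimes> a \<otimes> inv g \<in> CZ G r z"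
proof -
  assume A: "\<forall>i<r. z i \<in> carrier G" "g \<in> carrier G" "a \<in> CZ G r z"
  then obtain i where i: "i < r" "a \<in> conj_closure G {z i}" unfolding CZ_def by blast
  hence "g \<otimes> a \<otimes> inv g \<in> conj_closure G {z i}" using conj_closure_conj[of "{z i}" g a] A by blast
  thus ?thesis using i unfolding CZ_def by blast
qed

lemma CZ_incl: "(\<forall>i<r. z i \<in> carrier G) \<Longrightarrow> i < r \<Longrightarrow> z i \<in> CZ G r z"
  unfolding CZ_def using conj_closure_incl[of "{z i}"] by blast

lemma CZ_normal_sub: "(\<forall>i<r. z i \<in> K) \<Longrightarrow> K \<lhd> G \<Longrightarrow> CZ G r z \<subseteq> K"
proof
  fix a assume A: "\<forall>i<r. z i \<in> K" "K \<lhd> G" "a \<in> CZ G r z"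
  then obtain i where i: "i < r" "a \<in> conj_closure G {z i}" unfolding CZ_def by blast
  thus "a \<in> K" using conj_closure_normal_sub[of K "{z i}"] A by blast
qed

lemma gen_normal:
  assumes "A \<subseteq> carrier G" "\<And>g a. g \<in> carrier G \<Longrightarrow> a \<in> A \<Longrightarrow> g \<otimes> a \<otimes> inv g \<in> A"
  shows "generate G A \<lhd> G"
  using normal_generateI assms by blast

lemma CZ_gen_normal:
  assumes "\<forall>i<r. z i \<in> carrier G" "N \<lhd> G"
  shows "generate G (CZ G r z \<union> N) \<lhd> G"
  apply (rule gen_normal)
  using CZ_sub[OF assms(1)] normal_imp_subgroup[OF assms(2)] subgroup.subset apply blast
  using CZ_conj[OF assms(1)] normal.inv_op_closed2[OF assms(2)] by blast

lemma CZ_gen_normal2: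
  assumes "\<forall>i<r. z i \<in> carrier G" "N \<lhd> G" "N2 \<lhd> G"
  shows "generate G (CZ G r z \<union> N \<union> N2) \<lhd> G"
  apply (rule gen_normal)
  using CZ_sub[OF assms(1)] normal_imp_subgroup[OF assms(2)] normal_imp_subgroup[OF assms(3)] subgroup.subset apply blast
  using CZ_conj[OF assms(1)] normal.inv_op_closed2[OF assms(2)] normal.inv_op_closed2[OF assms(3)] by blast

lemma normal_comm_left:
  assumes "K \<lhd> G" "w \<in> K" "y \<in> carrier G"
  shows "w \<otimes> y \<otimes> inv w \<otimes> inv y \<in> K"
proof -
  have wc: "w \<in> carrier G" using assms normal_imp_subgroup subgroup.mem_carrier by metis
  have "y \<otimes> inv w \<otimes> inv y \<in> K"
  proof -
    have "inv w \<in> K" using assms(2) normal_imp_subgroup[OF assms(1)] subgroup.m_inv_closed by metis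
    thus ?thesis by (rule normal.inv_op_closed2[OF assms(1) assms(3)])
  qed
  hence "w \<otimes> (y \<otimes> inv w \<otimes> inv y) \<in> K"
    by (rule subgroup.m_closed[OF normal_imp_subgroup[OF assms(1)] assms(2)])
  moreover have "w \<otimes> y \<otimes> inv w \<otimes> inv y = w \<otimes> (y \<otimes> inv w \<otimes> inv y)"
    using wc assms(3) by (simp add: m_assoc)
  ultimately show ?thesis by simp
qed

lemma normal_comm_right:
  assumes "K \<lhd> G" "w \<in> carrier G" "y \<in> K"
  shows "w \<otimes> y \<otimes> inv w \<otimes> inv y \<in> K"
proof -
  have yc: "y \<in> carrier G" using assms normal_imp_subgroup subgroup.mem_carrier by metis
  have "w \<otimes> y \<otimes> inv w \<in> K"
    using normal.inv_op_closed2[OF assms(1) assms(2) assms(3)] .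
  moreover have "inv y \<in> K" using assms normal_imp_subgroup subgroup.m_inv_closed by metis
  ultimately show ?thesis by (rule subgroup.m_closed[OF normal_imp_subgroup[OF assms(1)]])
qed

lemma comm_all:
  assumes K: "K \<lhd> G" and AB: "A \<subseteq> carrier G" "B \<subseteq> carrier G"
    and gen: "generate G (A \<union> B) = carrier G" and AK: "A \<subseteq> K"
    and BB: "\<forall>a\<in>B. \<forall>b\<in>B. a \<otimes> b \<otimes> inv a \<otimes> inv b \<in> K"
    and x: "x \<in> carrier G" and y: "y \<in> carrier G"
  shows "x \<otimes> y \<otimes> inv x \<otimes> inv y \<in> K"
proof -
  interpret h: group_hom G "G Mod K" "\<lambda>a. K #> a" using quot_hom[OF K] .
  let ?Z = "\<lambda>C. {g \<in> carrier G. \<forall>a\<in>C. (K #> g) \<otimes>\<^bsub>G Mod K\<^esub> (K #> a) = (K #> a) \<otimes>\<^bsub>G Mod K\<^esub> (K #> g)}"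
  have triv: "K #> a = \<one>\<^bsub>G Mod K\<^esub>" if "a \<in> A" for a
  proof -
    have "K #> a = K" using quot_kernel[OF K, of a] that AK AB by blast
    thus ?thesis by simp
  qed
  have Acomm: "A \<subseteq> ?Z C" if "C \<subseteq> carrier G" for C
  proof
    fix a assume a: "a \<in> A"
    show "a \<in> ?Z C" using a AB that triv[OF a] h.hom_closed
      by (auto simp del: mult_FactGroup one_FactGroup)
  qed
  have Z1: "?Z B = carrier G"
  proof
    have "generate G (A \<union> B) \<subseteq> ?Z B"
    proof (rule generate_subgroup_incl)
      show "subgroup (?Z B) G" by (rule h.cent_pre_subgroup[OF AB(2)])
      show "A \<union> B \<subseteq> ?Z B"
        using Acomm[OF AB(2)] quot_comm[OF K] BB AB(2) by blast
    qed
    thus "carrier G \<subseteq> ?Z B" using gen by simp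
  qed auto
  have Z2: "?Z (carrier G) = carrier G"
  proof
    have "generate G (A \<union> B) \<subseteq> ?Z (carrier G)"
    proof (rule generate_subgroup_incl)
      show "subgroup (?Z (carrier G)) G" by (rule h.cent_pre_subgroup) simp
      show "A \<union> B \<subseteq> ?Z (carrier G)"
        using Acomm[of "carrier G"] Z1 AB(2) by blast
    qed
    thus "carrier G \<subseteq> ?Z (carrier G)" using gen by simp
  qed auto
  show ?thesis using Z2 x y quot_comm[OF K x y] by blast
qed

lemma derived_sub_normal:
  assumes K: "K \<lhd> G" and "\<forall>x\<in>carrier G. \<forall>y\<in>carrier G. x \<otimes> y \<otimes> inv x \<otimes> inv y \<in> K"
  shows "derived G (carrier G) \<subseteq> K"
  unfolding derived_def
  apply (rule generate_subgroup_incl)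
  using assms apply blast
  using normal_imp_subgroup[OF K] .

lemma commute_cancel:
  assumes "z \<in> carrier G" "a \<in> carrier G" "b \<in> carrier G"
    and "z \<otimes> b = b \<otimes> z" and "(z \<otimes> a) \<otimes> b = b \<otimes> (z \<otimes> a)"
  shows "a \<otimes> b = b \<otimes> a"
proof -
  have "z \<otimes> (a \<otimes> b) = z \<otimes> (b \<otimes> a)"
    using assms by (metis m_assoc)
  thus ?thesis using assms by (metis l_cancel m_closed)
qed

end


context group begin
lemma inv_cancel_l: "x \<in> carrier G \<Longrightarrow> z \<in> carrier G \<Longrightarrow> inv x \<otimes> (x \<otimes> z) = z"
  by (metis inv_closed l_inv l_one m_assoc)

lemma inv_cancel_r: "x \<in> carrier G \<Longrightarrow> z \<in> carrier G \<Longrightarrow> x \<otimes> (inv x \<otimes> z) = z"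
  by (metis inv_closed r_inv l_one m_assoc)

lemma conj_comm:
  assumes "x \<in> carrier G" "h \<in> carrier G" "y \<in> carrier G"
  shows "x \<otimes> (h \<otimes> y \<otimes> inv h \<otimes> inv y) \<otimes> inv x =
    (x \<otimes> h \<otimes> inv x) \<otimes> (x \<otimes> y \<otimes> inv x) \<otimes> inv (x \<otimes> h \<otimes> inv x) \<otimes> inv (x \<otimes> y \<otimes> inv x)"
  using assms by (simp add: m_assoc inv_mult_group inv_cancel_l)

lemma comm_mod_normal:
  assumes M: "M \<lhd> G" and M': "M' \<lhd> G"
  shows "{x \<in> M'. \<forall>y\<in>M'. x \<otimes> y \<otimes> inv x \<otimes> inv y \<in> M} \<lhd> G"
proof -
  interpret h: group_hom G "G Mod M" "\<lambda>a. M #> a" using quot_hom[OF M] .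
  have M'sub: "M' \<subseteq> carrier G" using M' normal_imp_subgroup subgroup.subset by blast
  let ?Z = "{g \<in> carrier G. \<forall>a\<in>M'. (M #> g) \<otimes>\<^bsub>G Mod M\<^esub> (M #> a) = (M #> a) \<otimes>\<^bsub>G Mod M\<^esub> (M #> g)}"
  have Zs: "subgroup ?Z G" by (rule h.cent_pre_subgroup[OF M'sub])
  have eq: "{x \<in> M'. \<forall>y\<in>M'. x \<otimes> y \<otimes> inv x \<otimes> inv y \<in> M} = M' \<inter> ?Z"
    using quot_comm[OF M] M'sub by blast
  have sub: "subgroup (M' \<inter> ?Z) G"
    using subgroups_Inter_pair[OF normal_imp_subgroup[OF M'] Zs] .
  show ?thesis unfolding eq
  proof (rule normal_invI[OF sub])
    fix x h assume x: "x \<in> carrier G" and h: "h \<in> M' \<inter> ?Z"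
    hence hM': "h \<in> M'" and hc: "h \<in> carrier G" by auto
    have hW: "\<forall>y\<in>M'. h \<otimes> y \<otimes> inv h \<otimes> inv y \<in> M" using h eq by blast
    have "x \<otimes> h \<otimes> inv x \<in> {x \<in> M'. \<forall>y\<in>M'. x \<otimes> y \<otimes> inv x \<otimes> inv y \<in> M}"
    proof (safe)
      show "x \<otimes> h \<otimes> inv x \<in> M'" by (rule normal.inv_op_closed2[OF M' x hM'])
      fix y assume y: "y \<in> M'"
      have yc: "y \<in> carrier G" using y M'sub by blast
      have y': "inv x \<otimes> y \<otimes> x \<in> M'" by (rule normal.inv_op_closed1[OF M' x y])
      hence "h \<otimes> (inv x \<otimes> y \<otimes> x) \<otimes> inv h \<otimes> inv (inv x \<otimes> y \<otimes> x) \<in> M" using hW by blast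
      hence "x \<otimes> (h \<otimes> (inv x \<otimes> y \<otimes> x) \<otimes> inv h \<otimes> inv (inv x \<otimes> y \<otimes> x)) \<otimes> inv x \<in> M"
        by (rule normal.inv_op_closed2[OF M x])
      moreover have "x \<otimes> (inv x \<otimes> y \<otimes> x) \<otimes> inv x = y" using x yc by (simp add: m_assoc inv_cancel_r)
      ultimately show "x \<otimes> h \<otimes> inv x \<otimes> y \<otimes> inv (x \<otimes> h \<otimes> inv x) \<otimes> inv y \<in> M"
        using conj_comm[OF x hc, of "inv x \<otimes> y \<otimes> x"] x yc by simp
    qed
    thus "x \<otimes> h \<otimes> inv x \<in> M' \<inter> ?Z" using eq by blast
  qed
qed
end



context group begin

lemma weight_step:
  fixes r :: nat and N0 M M' :: "'a set" and z :: "nat \<Rightarrow> 'a"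
  assumes r: "0 < r" and N0: "N0 \<lhd> G" and M: "M \<lhd> G" and M': "M' \<lhd> G"
    and N0M: "N0 \<subseteq> M" and MM': "M \<subset> M'"
    and minimal: "\<And>W. W \<lhd> G \<Longrightarrow> M \<subset> W \<Longrightarrow> W \<subseteq> M' \<Longrightarrow> W = M'"
    and zc: "\<forall>i<r. z i \<in> carrier G"
    and inv: "generate G (CZ G r z \<union> derived G (carrier G) \<union> N0) = carrier G"
    and top: "generate G (CZ G r z \<union> M') = carrier G"
  shows "\<exists>z'. (\<forall>i<r. z' i \<in> carrier G)
          \<and> generate G (CZ G r z' \<union> derived G (carrier G) \<union> N0) = carrier G
          \<and> generate G (CZ G r z' \<union> M) = carrier G"
proof (cases "generate G (CZ G r z \<union> M) = carrier G")
  case True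
  thus ?thesis using zc inv by blast
next
  case False
  define D where "D = derived G (carrier G)"
  have Dn: "D \<lhd> G" unfolding D_def by (rule derived_self_is_normal)
  define K where "K = generate G (CZ G r z \<union> M)"
  have Kn: "K \<lhd> G" unfolding K_def by (rule CZ_gen_normal[OF zc M])
  have Ksub: "subgroup K G" using Kn normal_imp_subgroup by blast
  have MK: "M \<subseteq> K" unfolding K_def using generate.incl[of _ "CZ G r z \<union> M" G] by blast
  have CZK: "CZ G r z \<subseteq> K" unfolding K_def using generate.incl[of _ "CZ G r z \<union> M" G] by blast
  have KG: "K \<noteq> carrier G" using False K_def by simp
  have M'sub: "M' \<subseteq> carrier G" using M' normal_imp_subgroup subgroup.subset by blast
  have Msub: "M \<subseteq> carrier G" using M normal_imp_subgroup subgroup.subset by blast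
  have CZsub: "CZ G r z \<subseteq> carrier G" by (rule CZ_sub[OF zc])
  have KM': "K \<inter> M' = M"
  proof (rule ccontr)
    assume ne: "K \<inter> M' \<noteq> M"
    have "K \<inter> M' \<lhd> G" by (rule normal_subgroup_intersect[OF Kn M'])
    moreover have "M \<subset> K \<inter> M'" using ne MK MM' by blast
    ultimately have "K \<inter> M' = M'" using minimal by blast
    hence "M' \<subseteq> K" by blast
    hence "generate G (CZ G r z \<union> M') \<subseteq> K"
      by (intro generate_subgroup_incl[OF _ Ksub]) (use CZK in blast)
    hence "carrier G \<subseteq> K" using top by simp
    thus False using subgroup.subset[OF Ksub] KG by blast
  qed
  show ?thesis
  proof (cases "\<forall>a\<in>M'. \<forall>b\<in>M'. a \<otimes> b \<otimes> inv a \<otimes> inv b \<in> M")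
    case True
    have "\<forall>x\<in>carrier G. \<forall>y\<in>carrier G. x \<otimes> y \<otimes> inv x \<otimes> inv y \<in> K"
    proof -
      have BBK: "\<forall>a\<in>M'. \<forall>b\<in>M'. a \<otimes> b \<otimes> inv a \<otimes> inv b \<in> K" using True MK by blast
      show ?thesis using comm_all[OF Kn CZsub M'sub top CZK BBK] by blast
    qed
    hence DK: "D \<subseteq> K" unfolding D_def by (rule derived_sub_normal[OF Kn])
    have "generate G (CZ G r z \<union> D \<union> N0) \<subseteq> K"
      by (rule generate_subgroup_incl[OF _ Ksub]) (use CZK DK N0M MK in blast)
    hence "carrier G \<subseteq> K" using inv unfolding D_def by simp
    hence False using subgroup.subset[OF Ksub] KG by blast
    thus ?thesis ..
  next
    case False
    then obtain a b where ab: "a \<in> M'" "b \<in> M'" "a \<otimes> b \<otimes> inv a \<otimes> inv b \<notin> M" by blast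
    have ac: "a \<in> carrier G" and bc: "b \<in> carrier G" using ab M'sub by auto
    define W where "W = {x \<in> M'. \<forall>y\<in>M'. x \<otimes> y \<otimes> inv x \<otimes> inv y \<in> M}"
    have Xn: "W \<lhd> G" unfolding W_def by (rule comm_mod_normal[OF M M'])
    have MX: "M \<subseteq> W" unfolding W_def using MM' normal_comm_left[OF M] M'sub by blast
    have "W \<noteq> M'" using ab unfolding W_def by blast
    have XM: "W = M"
    proof (rule ccontr)
      assume "W \<noteq> M"
      hence "M \<subset> W" using MX by blast
      moreover have "W \<subseteq> M'" unfolding W_def by blast
      ultimately have "W = M'" using minimal[OF Xn] by blast
      thus False using \<open>W \<noteq> M'\<close> by blast
    qed
    define m where "m = a \<otimes> b \<otimes> inv a \<otimes> inv b"
    have mc: "m \<in> carrier G" unfolding m_def using ac bc by simp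
    have mM': "m \<in> M'" unfolding m_def using normal_comm_left[OF M' ab(1) bc] .
    have "m \<in> derived_set G (carrier G)" unfolding m_def using ac bc by blast
    hence mD: "m \<in> D" unfolding D_def derived_def by (rule generate.incl)
    have "m \<notin> W" using XM ab m_def by simp
    then obtain m' where m': "m' \<in> M'" "m \<otimes> m' \<otimes> inv m \<otimes> inv m' \<notin> M"
      unfolding W_def using mM' by blast
    have m'c: "m' \<in> carrier G" using m' M'sub by auto
    define z' where "z' = z(0 := z 0 \<otimes> m)"
    have z0c: "z 0 \<in> carrier G" using zc r by simp
    have zc': "\<forall>i<r. z' i \<in> carrier G" unfolding z'_def using zc mc z0c by simp
    have z'0: "z' 0 \<in> CZ G r z'" using CZ_incl[OF zc' r] .
    define J where "J = generate G (CZ G r z' \<union> D \<union> N0)"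
    have Jn: "J \<lhd> G" unfolding J_def by (rule CZ_gen_normal2[OF zc' Dn N0])
    have Jsub: "subgroup J G" using Jn normal_imp_subgroup by blast
    have "\<forall>i<r. z i \<in> J"
    proof (intro allI impI)
      fix i assume i: "i < r"
      show "z i \<in> J"
      proof (cases "i = 0")
        case True
        have "z 0 \<otimes> m \<in> J" unfolding J_def using z'0 z'_def generate.incl[of _ "CZ G r z' \<union> D \<union> N0" G] by auto
        moreover have "inv m \<in> J" unfolding J_def using mD generate.incl[of m "CZ G r z' \<union> D \<union> N0" G]
          subgroup.m_inv_closed[OF Jsub[unfolded J_def]] by blast
        ultimately have "z 0 \<otimes> m \<otimes> inv m \<in> J" by (rule subgroup.m_closed[OF Jsub])
        thus ?thesis using True z0c mc by (simp add: m_assoc)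
      next
        case False
        hence "z i = z' i" unfolding z'_def by simp
        thus ?thesis unfolding J_def using CZ_incl[OF zc' i] generate.incl[of _ "CZ G r z' \<union> D \<union> N0" G] by auto
      qed
    qed
    hence "CZ G r z \<subseteq> J" by (rule CZ_normal_sub[OF _ Jn])
    moreover have "D \<subseteq> J" "N0 \<subseteq> J" unfolding J_def using generate.incl[of _ "CZ G r z' \<union> D \<union> N0" G] by auto
    ultimately have "generate G (CZ G r z \<union> D \<union> N0) \<subseteq> J"
      by (intro generate_subgroup_incl[OF _ Jsub]) blast
    hence "carrier G \<subseteq> J" using inv unfolding D_def by simp
    hence inv': "J = carrier G" using subgroup.subset[OF Jsub] by blast
    define K2 where "K2 = generate G (CZ G r z' \<union> M)"
    have K2n: "K2 \<lhd> G" unfolding K2_def by (rule CZ_gen_normal[OF zc' M])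
    have K2sub: "subgroup K2 G" using K2n normal_imp_subgroup by blast
    have zmK2: "z 0 \<otimes> m \<in> K2" unfolding K2_def using z'0 z'_def generate.incl[of _ "CZ G r z' \<union> M" G] by auto
    define c where "c = (z 0 \<otimes> m) \<otimes> m' \<otimes> inv (z 0 \<otimes> m) \<otimes> inv m'"
    have cK2: "c \<in> K2" unfolding c_def by (rule normal_comm_left[OF K2n zmK2 m'c])
    have cM': "c \<in> M'" unfolding c_def using normal_comm_right[OF M' _ m'(1)] z0c mc by simp
    have z0K: "z 0 \<in> K" using CZK CZ_incl[OF zc r] by blast
    have "z 0 \<otimes> m' \<otimes> inv (z 0) \<otimes> inv m' \<in> K \<inter> M'"
      using normal_comm_left[OF Kn z0K m'c] normal_comm_right[OF M' z0c m'(1)] by blast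
    hence zcomm: "z 0 \<otimes> m' \<otimes> inv (z 0) \<otimes> inv m' \<in> M" using KM' by simp
    have "c \<notin> M"
    proof
      assume cM: "c \<in> M"
      interpret h: group_hom G "G Mod M" "\<lambda>a. M #> a" using quot_hom[OF M] .
      have Qg: "group (G Mod M)" by (rule quot_group[OF M])
      have e1: "(M #> z 0) \<otimes>\<^bsub>G Mod M\<^esub> (M #> m') = (M #> m') \<otimes>\<^bsub>G Mod M\<^esub> (M #> z 0)"
        using quot_comm[OF M z0c m'c] zcomm by blast
      have e2: "(M #> (z 0 \<otimes> m)) \<otimes>\<^bsub>G Mod M\<^esub> (M #> m') = (M #> m') \<otimes>\<^bsub>G Mod M\<^esub> (M #> (z 0 \<otimes> m))"
        using quot_comm[OF M _ m'c, of "z 0 \<otimes> m"] cM z0c mc unfolding c_def by simp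
      hence e2': "((M #> z 0) \<otimes>\<^bsub>G Mod M\<^esub> (M #> m)) \<otimes>\<^bsub>G Mod M\<^esub> (M #> m') = (M #> m') \<otimes>\<^bsub>G Mod M\<^esub> ((M #> z 0) \<otimes>\<^bsub>G Mod M\<^esub> (M #> m))"
        using z0c mc by (simp add: h.hom_mult del: mult_FactGroup)
      have "(M #> m) \<otimes>\<^bsub>G Mod M\<^esub> (M #> m') = (M #> m') \<otimes>\<^bsub>G Mod M\<^esub> (M #> m)"
        using group.commute_cancel[OF Qg h.hom_closed[OF z0c] h.hom_closed[OF mc] h.hom_closed[OF m'c] e1 e2'] .
      hence "m \<otimes> m' \<otimes> inv m \<otimes> inv m' \<in> M" using quot_comm[OF M mc m'c] by blast
      thus False using m' by blast
    qed
    have "K2 \<inter> M' = M'"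
    proof (rule minimal)
      show "K2 \<inter> M' \<lhd> G" by (rule normal_subgroup_intersect[OF K2n M'])
      have "M \<subseteq> K2" unfolding K2_def using generate.incl[of _ "CZ G r z' \<union> M" G] by blast
      thus "M \<subset> K2 \<inter> M'" using cK2 cM' \<open>c \<notin> M\<close> MM' by blast
    qed auto
    hence M'K2: "M' \<subseteq> K2" by blast
    have "\<forall>i<r. z i \<in> K2"
    proof (intro allI impI)
      fix i assume i: "i < r"
      show "z i \<in> K2"
      proof (cases "i = 0")
        case True
        have "inv m \<in> K2" using M'K2 mM' subgroup.m_inv_closed[OF K2sub] by blast
        with zmK2 have "z 0 \<otimes> m \<otimes> inv m \<in> K2" by (rule subgroup.m_closed[OF K2sub])
        thus ?thesis using True z0c mc by (simp add: m_assoc)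
      next
        case False
        hence "z i = z' i" unfolding z'_def by simp
        thus ?thesis unfolding K2_def using CZ_incl[OF zc' i] generate.incl[of _ "CZ G r z' \<union> M" G] by auto
      qed
    qed
    hence "CZ G r z \<subseteq> K2" by (rule CZ_normal_sub[OF _ K2n])
    hence "generate G (CZ G r z \<union> M') \<subseteq> K2"
      by (intro generate_subgroup_incl[OF _ K2sub]) (use M'K2 in blast)
    hence "carrier G \<subseteq> K2" using top by simp
    hence "K2 = carrier G" using subgroup.subset[OF K2sub] by blast
    thus ?thesis using zc' inv' J_def K2_def D_def by blast
  qed
qed

end


context group begin

lemma weight_ind:
  assumes fin: "finite (carrier G)" and r: "0 < r" and N0: "N0 \<lhd> G"
    and yc: "\<forall>i<r. y i \<in> carrier G"
    and ygen: "generate G (CZ G r y \<union> derived G (carrier G) \<union> N0) = carrier G"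
  shows "M \<lhd> G \<Longrightarrow> N0 \<subseteq> M \<Longrightarrow> \<exists>z. (\<forall>i<r. z i \<in> carrier G)
          \<and> generate G (CZ G r z \<union> derived G (carrier G) \<union> N0) = carrier G
          \<and> generate G (CZ G r z \<union> M) = carrier G"
proof (induction "card (carrier G) - card M" arbitrary: M rule: less_induct)
  case (less M)
  have Msub: "M \<subseteq> carrier G" using less.prems(1) normal_imp_subgroup subgroup.subset by blast
  show ?case
  proof (cases "M = carrier G")
    case True
    have "generate G (CZ G r y \<union> M) = carrier G"
    proof
      show "generate G (CZ G r y \<union> M) \<subseteq> carrier G"
        using generate_incl[of "CZ G r y \<union> M"] CZ_sub[OF yc] Msub by blast
      show "carrier G \<subseteq> generate G (CZ G r y \<union> M)"
        using True generate.incl[of _ "CZ G r y \<union> M" G] by blast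
    qed
    thus ?thesis using yc ygen by blast
  next
    case False
    have "\<exists>M'. (M' \<lhd> G \<and> M \<subset> M') \<and> (\<forall>W. (W \<lhd> G \<and> M \<subset> W) \<longrightarrow> card M' \<le> card W)"
      by (rule ex_has_least_nat[of "\<lambda>W. W \<lhd> G \<and> M \<subset> W" "carrier G" card])
         (use normal_self Msub False in blast)
    then obtain M' where M': "M' \<lhd> G" "M \<subset> M'" and least: "\<And>W. W \<lhd> G \<Longrightarrow> M \<subset> W \<Longrightarrow> card M' \<le> card W"
      by blast
    have M'sub: "M' \<subseteq> carrier G" using M' normal_imp_subgroup subgroup.subset by blast
    have finM': "finite M'" using M'sub fin finite_subset by blast
    have minimal: "W = M'" if "W \<lhd> G" "M \<subset> W" "W \<subseteq> M'" for W
      using least[OF that(1,2)] that(3) finM' card_seteq by blast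
    have "card M < card M'" using M'(2) finM' psubset_card_mono by blast
    moreover have "card M' \<le> card (carrier G)" using M'sub fin card_mono by blast
    ultimately have "card (carrier G) - card M' < card (carrier G) - card M" by linarith
    moreover have "N0 \<subseteq> M'" using less.prems(2) M'(2) by blast
    ultimately obtain z where zc: "\<forall>i<r. z i \<in> carrier G"
      and inv: "generate G (CZ G r z \<union> derived G (carrier G) \<union> N0) = carrier G"
      and top: "generate G (CZ G r z \<union> M') = carrier G"
      using less.hyps[OF _ M'(1)] by blast
    show ?thesis
      by (rule weight_step[OF r N0 less.prems(1) M'(1) less.prems(2) M'(2) minimal zc inv top])
  qed
qed

end


context group begin

lemma rc_mult: "U \<in> rcosets S \<Longrightarrow> subgroup S G \<Longrightarrow> t \<in> carrier G \<Longrightarrow> U #> t \<in> rcosets S"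
proof -
  assume U: "U \<in> rcosets S" and S: "subgroup S G" and t: "t \<in> carrier G"
  then obtain x where x: "x \<in> carrier G" "U = S #> x" unfolding RCOSETS_def by blast
  have "U #> t = S #> (x \<otimes> t)" using x t S subgroup.subset coset_mult_assoc by metis
  thus ?thesis using x t S subgroup.subset rcosetsI by (metis m_closed)
qed

lemma rc_sub: "U \<in> rcosets S \<Longrightarrow> subgroup S G \<Longrightarrow> U \<subseteq> carrier G"
  using subgroup.rcosets_carrier is_group by blast

lemma sylow_conj_fixed:
  assumes fin: "finite (carrier G)" and p: "Factorial_Ring.prime p"
    and S: "subgroup S G" and T: "subgroup T G" and cT: "card T = p ^ j"
    and nd: "\<not> p dvd card (rcosets S)"
  shows "\<exists>g\<in>carrier G. \<forall>t\<in>T. inv g \<otimes> t \<otimes> g \<in> S"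
proof -
  define E where "E = rcosets S"
  define \<phi> where "\<phi> = (\<lambda>t. (\<lambda>U\<in>E. U #> inv t))"
  define TG where "TG = G\<lparr>carrier := T\<rparr>"
  have TGg: "group TG" unfolding TG_def by (rule subgroup_imp_group[OF T])
  have Tc: "t \<in> carrier G" if "t \<in> T" for t by (rule subgroup.mem_carrier[OF T that])
  have inE: "U #> t \<in> E" if "U \<in> E" "t \<in> carrier G" for U t
    using rc_mult[OF _ S] that unfolding E_def by simp
  have Esub: "U \<subseteq> carrier G" if "U \<in> E" for U using rc_sub[OF _ S] that unfolding E_def by simp
  have bka: "(U #> inv t) #> t = U" if "U \<in> E" "t \<in> carrier G" for U t
    using that Esub[OF that(1)] by (simp add: coset_mult_assoc)
  have bkb: "(U #> t) #> inv t = U" if "U \<in> E" "t \<in> carrier G" for U t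
    using that Esub[OF that(1)] by (simp add: coset_mult_assoc)
  have bij: "\<phi> t \<in> Bij E" if "t \<in> carrier G" for t
  proof -
    have "bij_betw (\<phi> t) E E"
    proof (rule bij_betwI[where g = "\<lambda>U. U #> t"])
      show "\<phi> t \<in> E \<rightarrow> E" unfolding \<phi>_def using inE that by auto
      show "(\<lambda>U. U #> t) \<in> E \<rightarrow> E" using inE that by auto
      show "\<phi> t U #> t = U" if "U \<in> E" for U unfolding \<phi>_def using bka that \<open>t \<in> carrier G\<close> by simp
      show "\<phi> t (U #> t) = U" if "U \<in> E" for U unfolding \<phi>_def using bkb inE that \<open>t \<in> carrier G\<close> by simp
    qed
    moreover have "\<phi> t \<in> extensional E" unfolding \<phi>_def by simp
    ultimately show ?thesis unfolding Bij_def by blast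
  qed
  have act: "group_action TG E \<phi>"
    unfolding group_action_def
  proof (rule group_hom.intro[OF TGg group_BijGroup])
    show "group_hom_axioms TG (BijGroup E) \<phi>"
    proof (unfold_locales, rule homI)
      fix t assume "t \<in> carrier TG"
      thus "\<phi> t \<in> carrier (BijGroup E)" using bij Tc unfolding TG_def BijGroup_def by simp
    next
      fix t1 t2 assume t: "t1 \<in> carrier TG" "t2 \<in> carrier TG"
      hence t': "t1 \<in> carrier G" "t2 \<in> carrier G" using Tc unfolding TG_def by auto
      have "\<phi> (t1 \<otimes> t2) = compose E (\<phi> t1) (\<phi> t2)"
      proof
        fix U show "\<phi> (t1 \<otimes> t2) U = compose E (\<phi> t1) (\<phi> t2) U"
        proof (cases "U \<in> E")
          case True
          have "U #> inv (t1 \<otimes> t2) = (U #> inv t2) #> inv t1"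
            using t' Esub[OF True] by (simp add: inv_mult_group coset_mult_assoc)
          thus ?thesis unfolding \<phi>_def compose_def using True inE t' by simp
        qed (simp add: \<phi>_def compose_def)
      qed
      thus "\<phi> (t1 \<otimes>\<^bsub>TG\<^esub> t2) = \<phi> t1 \<otimes>\<^bsub>BijGroup E\<^esub> \<phi> t2"
        using bij t' unfolding TG_def BijGroup_def by simp
    qed
  qed
  interpret act: group_action TG E \<phi> by (rule act)
  have finE: "finite E" unfolding E_def using fin rcosets_subset_PowG[OF S]
    by (meson finite_Pow_iff finite_subset)
  have "\<exists>U\<in>E. \<forall>t\<in>T. \<phi> t U = U"
  proof (rule ccontr)
    assume nofix: "\<not> (\<exists>U\<in>E. \<forall>t\<in>T. \<phi> t U = U)"
    have orbdvd: "p dvd card Ob" if Ob: "Ob \<in> orbits TG E \<phi>" for Ob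
    proof -
      obtain U where U: "U \<in> E" "Ob = orbit TG \<phi> U" using Ob unfolding orbits_def by blast
      have "card Ob * card (stabilizer TG \<phi> U) = card T"
        using act.orbit_stabilizer_theorem[OF U(1)] U(2) unfolding TG_def order_def by simp
      hence "card Ob dvd p ^ j" using cT by (metis dvd_triv_left)
      then obtain i where i: "card Ob = p ^ i" using divides_primepow_nat[OF p] by blast
      show ?thesis
      proof (cases i)
        case 0
        hence "card Ob = 1" using i by simp
        moreover have "U \<in> Ob" using act.orbit_refl[OF U(1)] U(2) by simp
        ultimately have O1: "Ob = {U}" by (metis card_1_singletonE singletonD)
        have "\<forall>t\<in>T. \<phi> t U = U"
        proof
          fix t assume "t \<in> T"
          hence "\<phi> t U \<in> Ob" unfolding U(2) orbit_def TG_def by auto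
          thus "\<phi> t U = U" using O1 by simp
        qed
        thus ?thesis using nofix U(1) by blast
      next
        case (Suc k)
        thus ?thesis using i by simp
      qed
    qed
    have "(\<Sum>Ob\<in>orbits TG E \<phi>. \<Sum>x\<in>Ob. (1::nat)) = (\<Sum>x\<in>E. 1)"
      by (rule act.disjoint_sum[OF finE])
    hence "(\<Sum>Ob\<in>orbits TG E \<phi>. card Ob) = card E" by simp
    moreover have "p dvd (\<Sum>Ob\<in>orbits TG E \<phi>. card Ob)" using orbdvd by (simp add: dvd_sum)
    ultimately show False using nd unfolding E_def by simp
  qed
  then obtain U where U: "U \<in> E" "\<forall>t\<in>T. \<phi> t U = U" by blast
  obtain x where x: "x \<in> carrier G" "U = S #> x" using U(1) unfolding E_def RCOSETS_def by blast
  have "\<forall>t\<in>T. inv (inv x) \<otimes> t \<otimes> inv x \<in> S"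
  proof
    fix t assume t: "t \<in> T"
    have tc: "t \<in> carrier G" using Tc t .
    have "U #> inv t = U" using U t unfolding \<phi>_def by simp
    hence "S #> (x \<otimes> inv t) = S #> x" using x tc subgroup.subset[OF S] by (simp add: coset_mult_assoc)
    moreover have "x \<otimes> inv t \<in> S #> (x \<otimes> inv t)" using rcos_self[OF _ S] x tc by simp
    ultimately have "x \<otimes> inv t \<otimes> inv x \<in> S" using subgroup.rcos_module_imp[OF S is_group x(1)] by simp
    hence "inv (x \<otimes> inv t \<otimes> inv x) \<in> S" by (rule subgroup.m_inv_closed[OF S])
    moreover have "inv (x \<otimes> inv t \<otimes> inv x) = x \<otimes> t \<otimes> inv x" using x tc by (simp add: inv_mult_group m_assoc)
    ultimately show "inv (inv x) \<otimes> t \<otimes> inv x \<in> S" using x by simp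
  qed
  thus ?thesis using x by blast
qed

end


context group begin

lemma conj_sub:
  assumes S: "subgroup S G" and g: "g \<in> carrier G"
  shows "subgroup ((\<lambda>s. g \<otimes> s \<otimes> inv g) ` S) G" "card ((\<lambda>s. g \<otimes> s \<otimes> inv g) ` S) = card S"
proof -
  have Sc: "s \<in> carrier G" if "s \<in> S" for s by (rule subgroup.mem_carrier[OF S that])
  show "subgroup ((\<lambda>s. g \<otimes> s \<otimes> inv g) ` S) G"
  proof (rule subgroup.intro)
    show "(\<lambda>s. g \<otimes> s \<otimes> inv g) ` S \<subseteq> carrier G" using Sc g by auto
  next
    fix x y assume "x \<in> (\<lambda>s. g \<otimes> s \<otimes> inv g) ` S" "y \<in> (\<lambda>s. g \<otimes> s \<otimes> inv g) ` S"
    then obtain a b where ab: "a \<in> S" "b \<in> S" "x = g \<otimes> a \<otimes> inv g" "y = g \<otimes> b \<otimes> inv g" by blast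
    have "x \<otimes> y = g \<otimes> (a \<otimes> b) \<otimes> inv g"
      using ab Sc g by (simp add: m_assoc inv_cancel_l)
    moreover have "a \<otimes> b \<in> S" by (rule subgroup.m_closed[OF S ab(1,2)])
    ultimately show "x \<otimes> y \<in> (\<lambda>s. g \<otimes> s \<otimes> inv g) ` S" by blast
  next
    have "\<one> = g \<otimes> \<one> \<otimes> inv g" using g by simp
    thus "\<one> \<in> (\<lambda>s. g \<otimes> s \<otimes> inv g) ` S" using subgroup.one_closed[OF S] by blast
  next
    fix x assume "x \<in> (\<lambda>s. g \<otimes> s \<otimes> inv g) ` S"
    then obtain a where a: "a \<in> S" "x = g \<otimes> a \<otimes> inv g" by blast
    have "inv x = g \<otimes> inv a \<otimes> inv g" using a Sc g by (simp add: inv_mult_group m_assoc)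
    moreover have "inv a \<in> S" by (rule subgroup.m_inv_closed[OF S a(1)])
    ultimately show "inv x \<in> (\<lambda>s. g \<otimes> s \<otimes> inv g) ` S" by blast
  qed
  have "inj_on (\<lambda>s. g \<otimes> s \<otimes> inv g) S"
  proof
    fix a b assume ab: "a \<in> S" "b \<in> S" "g \<otimes> a \<otimes> inv g = g \<otimes> b \<otimes> inv g"
    thus "a = b" using Sc g by (metis inv_closed m_closed l_cancel r_cancel)
  qed
  thus "card ((\<lambda>s. g \<otimes> s \<otimes> inv g) ` S) = card S" by (rule card_image)
qed

lemma sylow_gen_normal:
  assumes "Factorial_Ring.prime p"
  shows "sylow_gen G p \<lhd> G"
  unfolding sylow_gen_def
proof (rule normal_generateI)
  show "\<Union> {P. sylow_subgroup G p P} \<subseteq> carrier G"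
    unfolding sylow_subgroup_def using subgroup.subset by blast
  fix h g assume h: "h \<in> \<Union> {P. sylow_subgroup G p P}" and g: "g \<in> carrier G"
  then obtain P where P: "sylow_subgroup G p P" "h \<in> P" by blast
  have "sylow_subgroup G p ((\<lambda>s. g \<otimes> s \<otimes> inv g) ` P)"
    using conj_sub[OF _ g, of P] P(1) unfolding sylow_subgroup_def by simp
  moreover have "g \<otimes> h \<otimes> inv g \<in> (\<lambda>s. g \<otimes> s \<otimes> inv g) ` P" using P(2) by blast
  ultimately show "g \<otimes> h \<otimes> inv g \<in> \<Union> {P. sylow_subgroup G p P}" by blast
qed

lemma sylow_exists:
  assumes fin: "finite (carrier G)" and p: "Factorial_Ring.prime p"
  shows "\<exists>S. sylow_subgroup G p S"
proof -
  have "order G \<noteq> 0" using fin order_gt_0_iff_finite by simp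
  have "order G = p ^ multiplicity p (order G) * (order G div p ^ multiplicity p (order G))"
    using multiplicity_dvd[of p "order G"] by simp
  thus ?thesis using sylow_thm[OF p is_group _ fin] unfolding sylow_subgroup_def by blast
qed

lemma sylow_index:
  assumes fin: "finite (carrier G)" and p: "Factorial_Ring.prime p"
    and H: "subgroup H G" and S: "subgroup S G" and SH: "S \<subseteq> H"
    and cS: "card S = p ^ multiplicity p (order G)"
  shows "\<not> p dvd card (rcosets\<^bsub>G\<lparr>carrier := H\<rparr>\<^esub> S)"
proof
  assume pd: "p dvd card (rcosets\<^bsub>G\<lparr>carrier := H\<rparr>\<^esub> S)"
  have nz: "order G \<noteq> 0" using fin order_gt_0_iff_finite by simp
  have nu: "\<not> is_unit p" using p not_prime_unit by blast
  obtain m where m: "order G = p ^ multiplicity p (order G) * m" "\<not> p dvd m"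
    using multiplicity_decompose'[OF nz nu] by blast
  have HG: "group (G\<lparr>carrier := H\<rparr>)" by (rule subgroup_imp_group[OF H])
  have SHs: "subgroup S (G\<lparr>carrier := H\<rparr>)" by (rule subgroup_incl[OF S H SH])
  have l1: "card (rcosets\<^bsub>G\<lparr>carrier := H\<rparr>\<^esub> S) * card S = card H"
    using group.lagrange[OF HG SHs] unfolding order_def by simp
  have l2: "card (rcosets H) * card H = order G" by (rule lagrange[OF H])
  have pa: "p ^ multiplicity p (order G) > 0" using p prime_gt_0_nat by simp
  define k where "k = card (rcosets\<^bsub>G\<lparr>carrier := H\<rparr>\<^esub> S)"
  define c where "c = card (rcosets H)"
  define q where "q = p ^ multiplicity p (order G)"
  have "k * c * q = c * (k * q)" by (simp add: mult_ac)
  also have "\<dots> = c * card H" using l1 cS unfolding k_def q_def by simp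
  also have "\<dots> = order G" using l2 unfolding c_def by simp
  also have "\<dots> = m * q" using m(1) unfolding q_def by (simp add: mult_ac)
  finally have "k * c = m" using pa prime_gt_0_nat[OF p] unfolding q_def by auto
  hence "card (rcosets\<^bsub>G\<lparr>carrier := H\<rparr>\<^esub> S) * card (rcosets H) = m" unfolding k_def c_def .
  hence "p dvd m" using pd by (metis dvd_mult2)
  thus False using m(2) by simp
qed

lemma sylow_in_conj:
  assumes fin: "finite (carrier G)" and p: "Factorial_Ring.prime p"
    and S: "sylow_subgroup G p S" and P: "sylow_subgroup G p P"
  shows "P \<subseteq> conj_closure G S"
proof -
  have Ss: "subgroup S G" and Ps: "subgroup P G" using S P unfolding sylow_subgroup_def by auto
  have "\<not> p dvd card (rcosets\<^bsub>G\<lparr>carrier := carrier G\<rparr>\<^esub> S)"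
    using sylow_index[OF fin p subgroup_self Ss] Ss subgroup.subset S unfolding sylow_subgroup_def by blast
  hence nd: "\<not> p dvd card (rcosets S)" by simp
  obtain g where g: "g \<in> carrier G" "\<forall>t\<in>P. inv g \<otimes> t \<otimes> g \<in> S"
    using sylow_conj_fixed[OF fin p Ss Ps _ nd] P unfolding sylow_subgroup_def by blast
  show ?thesis
  proof
    fix t assume t: "t \<in> P"
    have tc: "t \<in> carrier G" by (rule subgroup.mem_carrier[OF Ps t])
    have "t = g \<otimes> (inv g \<otimes> t \<otimes> g) \<otimes> inv g" using g tc by (simp add: m_assoc inv_cancel_r)
    thus "t \<in> conj_closure G S" unfolding conj_closure_def using g t by blast
  qed
qed

lemma frattini:
  assumes fin: "finite (carrier G)" and p: "Factorial_Ring.prime p"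
    and S: "sylow_subgroup G p S" and z: "z \<in> carrier G"
  shows "\<exists>n a. n \<in> sylow_gen G p \<and> a \<in> carrier G \<and> z = n \<otimes> a
          \<and> (\<forall>s\<in>S. a \<otimes> s \<otimes> inv a \<in> S \<and> inv a \<otimes> s \<otimes> a \<in> S)"
proof -
  define N where "N = sylow_gen G p"
  have Nn: "N \<lhd> G" unfolding N_def by (rule sylow_gen_normal[OF p])
  have Ns: "subgroup N G" by (rule normal_imp_subgroup[OF Nn])
  have Ss: "subgroup S G" using S unfolding sylow_subgroup_def by auto
  have Sc: "s \<in> carrier G" if "s \<in> S" for s by (rule subgroup.mem_carrier[OF Ss that])
  have SN: "S \<subseteq> N" unfolding N_def sylow_gen_def using S generate.incl[of _ "\<Union> {P. sylow_subgroup G p P}" G] by blast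
  define T where "T = (\<lambda>s. z \<otimes> s \<otimes> inv z) ` S"
  have Ts: "subgroup T G" and cT: "card T = card S" unfolding T_def using conj_sub[OF Ss z] by auto
  have TN: "T \<subseteq> N" unfolding T_def using SN normal.inv_op_closed2[OF Nn z] by blast
  define HG where "HG = G\<lparr>carrier := N\<rparr>"
  have HGg: "group HG" unfolding HG_def by (rule subgroup_imp_group[OF Ns])
  have finN: "finite (carrier HG)" unfolding HG_def using fin subgroup.subset[OF Ns] finite_subset by auto
  have SHs: "subgroup S HG" unfolding HG_def by (rule subgroup_incl[OF Ss Ns SN])
  have THs: "subgroup T HG" unfolding HG_def by (rule subgroup_incl[OF Ts Ns TN])
  have nd: "\<not> p dvd card (rcosets\<^bsub>HG\<^esub> S)"
    unfolding HG_def using sylow_index[OF fin p Ns Ss SN] S unfolding sylow_subgroup_def by blast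
  obtain n where n: "n \<in> carrier HG" "\<forall>t\<in>T. inv\<^bsub>HG\<^esub> n \<otimes>\<^bsub>HG\<^esub> t \<otimes>\<^bsub>HG\<^esub> n \<in> S"
  proof -
    have "card T = p ^ multiplicity p (order G)" using cT S unfolding sylow_subgroup_def by simp
    thus ?thesis using group.sylow_conj_fixed[OF HGg finN p SHs THs _ nd] that by blast
  qed
  have nN: "n \<in> N" using n(1) unfolding HG_def by simp
  have nc: "n \<in> carrier G" by (rule subgroup.mem_carrier[OF Ns nN])
  have ninv: "inv\<^bsub>HG\<^esub> n = inv n" unfolding HG_def using m_inv_consistent[OF Ns nN] .
  define a where "a = inv n \<otimes> z"
  have ac: "a \<in> carrier G" unfolding a_def using nc z by simp
  have za: "z = n \<otimes> a" unfolding a_def using nc z by (simp add: m_assoc[symmetric])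
  have fwd: "a \<otimes> s \<otimes> inv a \<in> S" if s: "s \<in> S" for s
  proof -
    have "z \<otimes> s \<otimes> inv z \<in> T" unfolding T_def using s by blast
    hence "inv n \<otimes> (z \<otimes> s \<otimes> inv z) \<otimes> n \<in> S" using n(2) ninv unfolding HG_def by simp
    moreover have "a \<otimes> s \<otimes> inv a = inv n \<otimes> (z \<otimes> s \<otimes> inv z) \<otimes> n"
      unfolding a_def using nc z Sc[OF s] by (simp add: m_assoc inv_mult_group)
    ultimately show ?thesis by simp
  qed
  have finS: "finite S" using fin subgroup.subset[OF Ss] finite_subset by auto
  have inj: "inj_on (\<lambda>s. a \<otimes> s \<otimes> inv a) S"
  proof
    fix x y assume "x \<in> S" "y \<in> S" "a \<otimes> x \<otimes> inv a = a \<otimes> y \<otimes> inv a"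
    thus "x = y" using Sc ac by (metis inv_closed m_closed l_cancel r_cancel)
  qed
  have img: "(\<lambda>s. a \<otimes> s \<otimes> inv a) ` S = S"
    using endo_inj_surj[OF finS _ inj] fwd by blast
  have bwd: "inv a \<otimes> s \<otimes> a \<in> S" if s: "s \<in> S" for s
  proof -
    obtain s' where s': "s' \<in> S" "s = a \<otimes> s' \<otimes> inv a" using img s by force
    have "inv a \<otimes> s \<otimes> a = s'" using s' Sc ac by (simp add: m_assoc inv_cancel_l)
    thus ?thesis using s' by simp
  qed
  show ?thesis using nN ac za fwd bwd unfolding N_def by blast
qed

end


context group begin

lemma lift_gens:
  assumes fin: "finite (carrier G)" and N: "N \<lhd> G"
  shows "\<exists>y. (\<forall>i. y i \<in> carrier G) \<and>
    generate G (y ` {..<min_gens (abelianization (G Mod N))} \<union> derived G (carrier G) \<union> N) = carrier G"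
proof -
  define d where "d = min_gens (abelianization (G Mod N))"
  define D1 where "D1 = G Mod N"
  interpret p1: group_hom G D1 "\<lambda>a. N #> a" unfolding D1_def by (rule quot_hom[OF N])
  have D1g: "group D1" unfolding D1_def by (rule quot_group[OF N])
  define Dd where "Dd = derived D1 (carrier D1)"
  have Ddn: "Dd \<lhd> D1" unfolding Dd_def by (rule group.derived_self_is_normal[OF D1g])
  define Ab where "Ab = D1 Mod Dd"
  have Abeq: "abelianization (G Mod N) = Ab" unfolding Ab_def abelianization_def D1_def Dd_def by simp
  interpret p2: group_hom D1 Ab "\<lambda>A. Dd #>\<^bsub>D1\<^esub> A" unfolding Ab_def by (rule group.quot_hom[OF D1g Ddn])
  have Abg: "group Ab" unfolding Ab_def by (rule group.quot_group[OF D1g Ddn])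
  define \<psi> where "\<psi> = (\<lambda>a. Dd #>\<^bsub>D1\<^esub> (N #> a))"
  have psihom: "\<psi> \<in> hom G Ab"
  proof (rule homI)
    fix x assume "x \<in> carrier G" thus "\<psi> x \<in> carrier Ab" unfolding \<psi>_def by simp
  next
    fix x y assume "x \<in> carrier G" "y \<in> carrier G"
    thus "\<psi> (x \<otimes> y) = \<psi> x \<otimes>\<^bsub>Ab\<^esub> \<psi> y" unfolding \<psi>_def by (simp add: p1.hom_mult p2.hom_mult)
  qed
  interpret ps: group_hom G Ab \<psi> by (intro group_hom.intro group_hom_axioms.intro is_group Abg psihom)
  have cD1: "carrier D1 = (\<lambda>a. N #> a) ` carrier G" unfolding D1_def by (rule carrier_FactGroup)
  have cAb: "carrier Ab = (\<lambda>A. Dd #>\<^bsub>D1\<^esub> A) ` carrier D1" unfolding Ab_def by (rule carrier_FactGroup)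
  have surj: "carrier Ab = \<psi> ` carrier G" unfolding cAb cD1 \<psi>_def by auto
  have finAb: "finite (carrier Ab)" using surj fin by simp
  have genAb: "generate Ab (carrier Ab) = carrier Ab"
    using group.generate_incl[OF Abg, of "carrier Ab"] generate.incl[of _ "carrier Ab" Ab] by blast
  have "\<exists>S. S \<subseteq> carrier Ab \<and> finite S \<and> card S = d \<and> generate Ab S = carrier Ab"
    unfolding d_def Abeq min_gens_def
    by (rule LeastI_ex) (use finAb genAb in blast)
  then obtain S0 where S0: "S0 \<subseteq> carrier Ab" "finite S0" "card S0 = d" "generate Ab S0 = carrier Ab"
    by blast
  obtain e where e: "bij_betw e {0..<d} S0" using ex_bij_betw_nat_finite[OF S0(2)] S0(3) by blast
  have pre: "\<exists>g. g \<in> carrier G \<and> \<psi> g = e i" if "i < d" for i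
  proof -
    have "e i \<in> carrier Ab" using e that S0(1) bij_betwE by fastforce
    thus ?thesis using surj by auto
  qed
  define y where "y = (\<lambda>i. if i < d then (SOME g. g \<in> carrier G \<and> \<psi> g = e i) else \<one>)"
  have yc: "\<forall>i. y i \<in> carrier G"
  proof
    fix i show "y i \<in> carrier G"
      using someI_ex[OF pre[of i]] unfolding y_def by (cases "i < d") auto
  qed
  have ye: "\<psi> (y i) = e i" if "i < d" for i
    using someI_ex[OF pre[OF that]] that unfolding y_def by simp
  define W where "W = generate G (y ` {..<d} \<union> derived G (carrier G) \<union> N)"
  have Nsub: "N \<subseteq> carrier G" by (rule subgroup.subset[OF normal_imp_subgroup[OF N]])
  have Dsub: "derived G (carrier G) \<subseteq> carrier G" by (rule derived_in_carrier) simp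
  have ysub: "y ` {..<d} \<subseteq> carrier G" using yc by blast
  have Wsub: "subgroup W G" unfolding W_def
    by (rule generate_is_subgroup) (rule Un_least[OF Un_least[OF ysub Dsub] Nsub])
  have Wincl: "y ` {..<d} \<union> derived G (carrier G) \<union> N \<subseteq> W"
    unfolding W_def by (rule subsetI, rule generate.incl)
  have "S0 \<subseteq> \<psi> ` W"
  proof
    fix U assume "U \<in> S0"
    moreover have "e ` {0..<d} = S0" by (rule bij_betw_imp_surj_on[OF e])
    ultimately obtain i where i: "i < d" "U = e i" by auto
    have "y i \<in> y ` {..<d}" using i(1) by simp
    hence "y i \<in> W" using Wincl by blast
    moreover have "U = \<psi> (y i)" using ye[OF i(1)] i(2) by simp
    ultimately show "U \<in> \<psi> ` W" by blast
  qed
  hence "generate Ab S0 \<subseteq> \<psi> ` W"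
    by (rule group.generate_subgroup_incl[OF Abg _ ps.subgroup_img_is_subgroup[OF Wsub]])
  hence AbW: "carrier Ab \<subseteq> \<psi> ` W" using S0(4) by simp
  have Dd_img: "Dd = (\<lambda>a. N #> a) ` derived G (carrier G)"
    unfolding Dd_def cD1 by (rule p1.derived_img) simp
  have ker: "x \<in> W" if x: "x \<in> carrier G" "\<psi> x = \<one>\<^bsub>Ab\<^esub>" for x
  proof -
    have "Dd #>\<^bsub>D1\<^esub> (N #> x) = Dd" using x(2) unfolding \<psi>_def Ab_def by simp
    hence "N #> x \<in> Dd" using group.quot_kernel[OF D1g Ddn, of "N #> x"] x(1) by simp
    then obtain x' where x': "x' \<in> derived G (carrier G)" "N #> x = N #> x'" using Dd_img by blast
    have x'c: "x' \<in> carrier G" using x' derived_in_carrier[of "carrier G"] by blast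
    have "x \<in> N #> x'" using x'(2) rcos_self[OF x(1) normal_imp_subgroup[OF N]] by simp
    hence xx: "x \<otimes> inv x' \<in> N"
      using subgroup.rcos_module_imp[OF normal_imp_subgroup[OF N] is_group x'c] by simp
    have "(x \<otimes> inv x') \<otimes> x' \<in> W"
      using xx x' Wincl subgroup.m_closed[OF Wsub] by blast
    thus ?thesis using x(1) x'c by (simp add: m_assoc)
  qed
  have "carrier G \<subseteq> W"
  proof
    fix g assume g: "g \<in> carrier G"
    obtain w where w: "w \<in> W" "\<psi> g = \<psi> w" using AbW ps.hom_closed[OF g] by blast
    have wc: "w \<in> carrier G" by (rule subgroup.mem_carrier[OF Wsub w(1)])
    have "\<psi> (g \<otimes> inv w) = \<one>\<^bsub>Ab\<^esub>"
      using g wc w(2) by (simp add: ps.hom_mult ps.hom_inv group.r_inv[OF Abg])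
    hence "g \<otimes> inv w \<in> W" using ker g wc by simp
    hence "(g \<otimes> inv w) \<otimes> w \<in> W" using w(1) subgroup.m_closed[OF Wsub] by blast
    thus "g \<in> W" using g wc by (simp add: m_assoc)
  qed
  hence "W = carrier G" using subgroup.subset[OF Wsub] by blast
  thus ?thesis using yc unfolding W_def d_def by blast
qed

end



context group begin

lemma cyc_by_p:
  assumes a: "a \<in> carrier G" and P: "subgroup P G"
    and nz: "\<forall>q\<in>generate G (P \<union> {a}). \<forall>s\<in>P. q \<otimes> s \<otimes> inv q \<in> P"
    and pg: "p_group p (G\<lparr>carrier := P\<rparr>)"
  shows "cyclic_by_p G p (generate G (P \<union> {a}))"
proof -
  define Q where "Q = generate G (P \<union> {a})"
  have Psub: "P \<subseteq> carrier G" by (rule subgroup.subset[OF P])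
  have PaS: "P \<union> {a} \<subseteq> carrier G" using Psub a by blast
  have Qs: "subgroup Q G" unfolding Q_def by (rule generate_is_subgroup[OF PaS])
  have PQ: "P \<subseteq> Q" unfolding Q_def using generate.incl[of _ "P \<union> {a}" G] by blast
  have aQ: "a \<in> Q" unfolding Q_def using generate.incl[of a "P \<union> {a}" G] by blast
  define QG where "QG = G\<lparr>carrier := Q\<rparr>"
  have QGg: "group QG" unfolding QG_def by (rule subgroup_imp_group[OF Qs])
  have PsQ: "subgroup P QG" unfolding QG_def by (rule subgroup_incl[OF P Qs PQ])
  have Pn: "P \<lhd> QG"
  proof (rule group.normal_invI[OF QGg PsQ])
    fix x h assume x: "x \<in> carrier QG" and h: "h \<in> P"
    have xQ: "x \<in> Q" using x unfolding QG_def by simp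
    have "inv\<^bsub>QG\<^esub> x = inv x" unfolding QG_def by (rule m_inv_consistent[OF Qs xQ])
    thus "x \<otimes>\<^bsub>QG\<^esub> h \<otimes>\<^bsub>QG\<^esub> inv\<^bsub>QG\<^esub> x \<in> P" using nz xQ h unfolding QG_def Q_def by simp
  qed
  define Qm where "Qm = QG Mod P"
  interpret pi: group_hom QG Qm "\<lambda>x. P #>\<^bsub>QG\<^esub> x" unfolding Qm_def by (rule group.quot_hom[OF QGg Pn])
  have Qmg: "group Qm" unfolding Qm_def by (rule group.quot_group[OF QGg Pn])
  have genQ: "generate QG (P \<union> {a}) = Q"
    unfolding QG_def Q_def by (rule generate_consistent[OF _ Qs[unfolded Q_def]]) (use PQ aQ Q_def in blast)
  have cQm: "carrier Qm = (\<lambda>x. P #>\<^bsub>QG\<^esub> x) ` carrier QG" unfolding Qm_def by (rule carrier_FactGroup)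
  have PaQG: "P \<union> {a} \<subseteq> carrier QG" using PQ aQ unfolding QG_def by simp
  have img: "generate Qm ((\<lambda>x. P #>\<^bsub>QG\<^esub> x) ` (P \<union> {a})) = carrier Qm"
    using pi.generate_img[OF PaQG] genQ cQm unfolding QG_def by simp
  have oneP: "P #>\<^bsub>QG\<^esub> s = \<one>\<^bsub>Qm\<^esub>" if "s \<in> P" for s
  proof -
    have "s \<in> carrier QG" using that PQ unfolding QG_def by auto
    hence "P #>\<^bsub>QG\<^esub> s = P" using group.quot_kernel[OF QGg Pn] that by blast
    thus ?thesis unfolding Qm_def by simp
  qed
  define x where "x = P #>\<^bsub>QG\<^esub> a"
  have aQG: "a \<in> carrier QG" using aQ unfolding QG_def by simp
  have xc: "x \<in> carrier Qm" unfolding x_def by (rule pi.hom_closed[OF aQG])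
  have "(\<lambda>x. P #>\<^bsub>QG\<^esub> x) ` (P \<union> {a}) \<subseteq> generate Qm {x}"
  proof
    fix u assume "u \<in> (\<lambda>x. P #>\<^bsub>QG\<^esub> x) ` (P \<union> {a})"
    then obtain v where v: "v \<in> P \<union> {a}" "u = P #>\<^bsub>QG\<^esub> v" by blast
    show "u \<in> generate Qm {x}"
    proof (cases "v \<in> P")
      case True
      thus ?thesis using v oneP generate.one by metis
    next
      case False
      hence "u = x" using v unfolding x_def by simp
      thus ?thesis using generate.incl[of x "{x}" Qm] by simp
    qed
  qed
  hence "generate Qm ((\<lambda>x. P #>\<^bsub>QG\<^esub> x) ` (P \<union> {a})) \<subseteq> generate Qm {x}"
    using group.generate_subgroup_incl[OF Qmg _ group.generate_is_subgroup[OF Qmg]] xc by blast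
  hence "generate Qm {x} = carrier Qm"
    using img group.generate_incl[OF Qmg, of "{x}"] xc by blast
  hence "is_cyclic Qm" unfolding is_cyclic_def using Qmg xc by blast
  thus ?thesis unfolding cyclic_by_p_def Q_def[symmetric] using Pn pg unfolding QG_def Qm_def by blast
qed

lemma main_aux:
  fixes p :: nat
  assumes "finite (carrier G)" and "Factorial_Ring.prime p"
  defines "r \<equiv> max (min_gens (abelianization (G Mod sylow_gen G p))) 1"
  shows "\<exists>Q :: nat \<Rightarrow> 'a set.
           (\<forall>i < r. subgroup (Q i) G \<and> cyclic_by_p G p (Q i))
         \<and> generate G (\<Union>i < r. conj_closure G (Q i)) = carrier G"
proof -
  note fin = assms(1) and p = assms(2)
  define N0 where "N0 = sylow_gen G p"
  define d where "d = min_gens (abelianization (G Mod N0))"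
  define D where "D = derived G (carrier G)"
  have N0n: "N0 \<lhd> G" unfolding N0_def by (rule sylow_gen_normal[OF p])
  have N0sub: "N0 \<subseteq> carrier G" by (rule subgroup.subset[OF normal_imp_subgroup[OF N0n]])
  have rd: "r = max d 1" unfolding r_def d_def N0_def ..
  have r0: "0 < r" unfolding rd by simp
  obtain y where yc: "\<forall>i. y i \<in> carrier G"
    and ygen0: "generate G (y ` {..<d} \<union> D \<union> N0) = carrier G"
    using lift_gens[OF fin N0n] unfolding d_def D_def by blast
  have ycr: "\<forall>i<r. y i \<in> carrier G" using yc by blast
  have "y ` {..<d} \<subseteq> CZ G r y"
  proof
    fix u assume "u \<in> y ` {..<d}"
    then obtain i where i: "i < d" "u = y i" by blast
    have "i < r" using i(1) unfolding rd by simp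
    thus "u \<in> CZ G r y" using CZ_incl[OF ycr] i(2) by blast
  qed
  hence "generate G (y ` {..<d} \<union> D \<union> N0) \<subseteq> generate G (CZ G r y \<union> D \<union> N0)"
    by (intro mono_generate) blast
  moreover have "generate G (CZ G r y \<union> D \<union> N0) \<subseteq> carrier G"
    by (rule generate_incl) (use CZ_sub[OF ycr] N0sub derived_in_carrier[of "carrier G"] D_def in blast)
  ultimately have ygen: "generate G (CZ G r y \<union> derived G (carrier G) \<union> N0) = carrier G"
    using ygen0 unfolding D_def by blast
  obtain z where zc: "\<forall>i<r. z i \<in> carrier G"
    and zgen: "generate G (CZ G r z \<union> N0) = carrier G"
    using weight_ind[OF fin r0 N0n ycr ygen N0n] by blast
  obtain S where S: "sylow_subgroup G p S" using sylow_exists[OF fin p] by blast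
  have Ss: "subgroup S G" using S unfolding sylow_subgroup_def by simp
  have Ssub: "S \<subseteq> carrier G" by (rule subgroup.subset[OF Ss])
  have z0: "z 0 \<in> carrier G" using zc r0 by simp
  obtain n a where na: "n \<in> N0" "a \<in> carrier G" "z 0 = n \<otimes> a"
     "\<forall>s\<in>S. a \<otimes> s \<otimes> inv a \<in> S \<and> inv a \<otimes> s \<otimes> a \<in> S"
    using frattini[OF fin p S z0] unfolding N0_def by blast
  define P :: "nat \<Rightarrow> 'a set" where "P = (\<lambda>i. if i = 0 then S else {\<one>})"
  define w where "w = (\<lambda>i. if i = 0 then a else z i)"
  define Q where "Q = (\<lambda>i. generate G (P i \<union> {w i}))"
  have Ps: "subgroup (P i) G" for i unfolding P_def using Ss triv_subgroup by simp
  have wc: "i < r \<Longrightarrow> w i \<in> carrier G" for i unfolding w_def using na(2) zc by simp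
  have Qsub: "i < r \<Longrightarrow> subgroup (Q i) G" for i
    unfolding Q_def by (rule generate_is_subgroup) (use subgroup.subset[OF Ps] wc in blast)
  define Nz where "Nz = {g \<in> carrier G. \<forall>s\<in>S. g \<otimes> s \<otimes> inv g \<in> S \<and> inv g \<otimes> s \<otimes> g \<in> S}"
  have Nzs: "subgroup Nz G"
  proof (rule subgroup.intro)
    show "Nz \<subseteq> carrier G" unfolding Nz_def by blast
  next
    fix g h assume g: "g \<in> Nz" and h: "h \<in> Nz"
    have gc: "g \<in> carrier G" and hc: "h \<in> carrier G" using g h unfolding Nz_def by auto
    show "g \<otimes> h \<in> Nz" unfolding Nz_def
    proof (safe)
      show "g \<otimes> h \<in> carrier G" using gc hc by simp
      fix s assume s: "s \<in> S"
      have sc: "s \<in> carrier G" using s Ssub by blast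
      have "h \<otimes> s \<otimes> inv h \<in> S" using h s unfolding Nz_def by blast
      hence "g \<otimes> (h \<otimes> s \<otimes> inv h) \<otimes> inv g \<in> S" using g unfolding Nz_def by blast
      thus "g \<otimes> h \<otimes> s \<otimes> inv (g \<otimes> h) \<in> S" using gc hc sc by (simp add: m_assoc inv_mult_group)
      have "inv g \<otimes> s \<otimes> g \<in> S" using g s unfolding Nz_def by blast
      hence "inv h \<otimes> (inv g \<otimes> s \<otimes> g) \<otimes> h \<in> S" using h unfolding Nz_def by blast
      thus "inv (g \<otimes> h) \<otimes> s \<otimes> (g \<otimes> h) \<in> S" using gc hc sc by (simp add: m_assoc inv_mult_group)
    qed
  next
    show "\<one> \<in> Nz" unfolding Nz_def using Ssub by auto
  next
    fix g assume g: "g \<in> Nz"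
    have gc: "g \<in> carrier G" using g unfolding Nz_def by auto
    show "inv g \<in> Nz" unfolding Nz_def using g gc by (simp add: Nz_def)
  qed
  have SNz: "S \<subseteq> Nz"
  proof
    fix t assume t: "t \<in> S"
    have tc: "t \<in> carrier G" using t Ssub by blast
    show "t \<in> Nz" unfolding Nz_def
    proof (safe)
      show "t \<in> carrier G" by (rule tc)
      fix s assume s: "s \<in> S"
      show "t \<otimes> s \<otimes> inv t \<in> S"
        using subgroup.m_closed[OF Ss subgroup.m_closed[OF Ss t s] subgroup.m_inv_closed[OF Ss t]] .
      show "inv t \<otimes> s \<otimes> t \<in> S"
        using subgroup.m_closed[OF Ss subgroup.m_closed[OF Ss subgroup.m_inv_closed[OF Ss t] s] t] .
    qed
  qed
  have aNz: "a \<in> Nz" unfolding Nz_def using na(2,4) by blast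
  have Q0Nz: "Q 0 \<subseteq> Nz" unfolding Q_def P_def w_def
    by (rule generate_subgroup_incl[OF _ Nzs]) (use SNz aNz in auto)
  have cyc: "cyclic_by_p G p (Q i)" if i: "i < r" for i
    unfolding Q_def
  proof (rule cyc_by_p[OF wc[OF i] Ps])
    show "\<forall>q\<in>generate G (P i \<union> {w i}). \<forall>s\<in>P i. q \<otimes> s \<otimes> inv q \<in> P i"
    proof (cases "i = 0")
      case True
      thus ?thesis using Q0Nz unfolding Q_def Nz_def P_def by auto
    next
      case False
      have "q \<in> carrier G" if "q \<in> generate G (P i \<union> {w i})" for q
        using generate_in_carrier[OF _ that] subgroup.subset[OF Ps] wc[OF i] by blast
      thus ?thesis using False unfolding P_def by auto
    qed
    show "p_group p (G\<lparr>carrier := P i\<rparr>)"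
      unfolding p_group_def
    proof (intro conjI)
      show "group (G\<lparr>carrier := P i\<rparr>)" by (rule subgroup_imp_group[OF Ps])
      show "finite (carrier (G\<lparr>carrier := P i\<rparr>))"
        using finite_subset[OF subgroup.subset[OF Ps] fin] by simp
      show "\<exists>k. card (carrier (G\<lparr>carrier := P i\<rparr>)) = p ^ k"
        using S unfolding P_def sylow_subgroup_def by (cases "i = 0") (auto intro: exI[of _ 0])
    qed
  qed
  define T where "T = generate G (\<Union>i<r. conj_closure G (Q i))"
  have Qc: "i < r \<Longrightarrow> Q i \<subseteq> carrier G" for i using Qsub subgroup.subset by blast
  have Tn: "T \<lhd> G" unfolding T_def
  proof (rule gen_normal)
    show "(\<Union>i<r. conj_closure G (Q i)) \<subseteq> carrier G" using conj_closure_sub Qc by blast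
    fix g u assume g: "g \<in> carrier G" and u: "u \<in> (\<Union>i<r. conj_closure G (Q i))"
    then obtain i where i: "i < r" "u \<in> conj_closure G (Q i)" by blast
    hence "g \<otimes> u \<otimes> inv g \<in> conj_closure G (Q i)" using conj_closure_conj[OF Qc[OF i(1)] g] by blast
    thus "g \<otimes> u \<otimes> inv g \<in> (\<Union>i<r. conj_closure G (Q i))" using i(1) by blast
  qed
  have Ts: "subgroup T G" by (rule normal_imp_subgroup[OF Tn])
  have QT: "Q i \<subseteq> T" if "i < r" for i
  proof -
    have "Q i \<subseteq> conj_closure G (Q i)" by (rule conj_closure_incl[OF Qc[OF that]])
    thus ?thesis unfolding T_def using that generate.incl[of _ "\<Union>i<r. conj_closure G (Q i)" G] by blast
  qed
  have SQ0: "S \<subseteq> Q 0" unfolding Q_def P_def using generate.incl[of _ "S \<union> {w 0}" G] by auto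
  have cST: "conj_closure G S \<subseteq> T"
  proof
    fix u assume "u \<in> conj_closure G S"
    hence "u \<in> conj_closure G (Q 0)" using SQ0 unfolding conj_closure_def by blast
    thus "u \<in> T" unfolding T_def using r0 generate.incl[of u "\<Union>i<r. conj_closure G (Q i)" G] by blast
  qed
  have N0T: "N0 \<subseteq> T" unfolding N0_def sylow_gen_def
    by (rule generate_subgroup_incl[OF _ Ts]) (use sylow_in_conj[OF fin p S] cST in blast)
  have wT: "w i \<in> T" if "i < r" for i
    using QT[OF that] generate.incl[of "w i" "P i \<union> {w i}" G] unfolding Q_def by blast
  have zT: "\<forall>i<r. z i \<in> T"
  proof (intro allI impI)
    fix i assume i: "i < r"
    show "z i \<in> T"
    proof (cases "i = 0")
      case True
      have "a \<in> T" using wT[OF r0] unfolding w_def by simp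
      hence "n \<otimes> a \<in> T" using na(1) N0T subgroup.m_closed[OF Ts] by blast
      thus ?thesis using True na(3) by simp
    next
      case False
      thus ?thesis using wT[OF i] unfolding w_def by simp
    qed
  qed
  have "CZ G r z \<subseteq> T" by (rule CZ_normal_sub[OF zT Tn])
  hence "generate G (CZ G r z \<union> N0) \<subseteq> T"
    by (intro generate_subgroup_incl[OF _ Ts]) (use N0T in blast)
  hence "T = carrier G" using zgen subgroup.subset[OF Ts] by blast
  thus ?thesis using Qsub cyc unfolding T_def by blast
qed

end

theorem mainTheorem5:
  fixes G :: "('a, 'b) monoid_scheme" and p :: nat
  assumes "group G" and "finite (carrier G)" and "Factorial_Ring.prime p"
  defines "r \<equiv> max (min_gens (abelianization (G Mod sylow_gen G p))) 1"
  shows "\<exists>Q :: nat \<Rightarrow> 'a set.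
           (\<forall>i < r. subgroup (Q i) G \<and> cyclic_by_p G p (Q i))
         \<and> generate G (\<Union>i < r. conj_closure G (Q i)) = carrier G"
  unfolding r_def by (rule group.main_aux[OF assms(1-3)])



end
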